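(* Let $E\in\mathbb C$ not be an eigenvalue of $h$, and let $g(E)=(h-EI_{nm})^{-1}$ with $m\times m$ blocks $g_{i,j}$, $i,j=1,\dots,n$. Then $$\begin{pmatrix}0 & -B_n^{-1}\\ g_{n,1} & g_{n,n}\end{pmatrix}=T(E)\begin{pmatrix} g_{1,1} & g_{1,n}\\ -C_1^{-1} & 0\end{pmatrix},$$ the block $g_{1,n}$ is invertible, and $$T(E)=\begin{pmatrix}-B_n^{-1}g_{1,n}^{-1} & -B_n^{-1}g_{1,n}^{-1}g_{1,1}C_1\\ g_{n,n}g_{1,n}^{-1} & g_{n,n}g_{1,n}^{-1}g_{1,1}C_1-g_{n,1}C_1\end{pmatrix}.$$
   Context: Fix integers $m\ge 1$, $n\ge 2$ and matrices $A_k,B_k,C_k\in\mathbb C^{m\times m}$, $k=1,\dots,n$, with all $B_k,C_k$ invertible. For $E\in\mathbb C$ the one-step transfer matrices are $t_k(E)=\begin{pmatrix} B_k^{-1}(E I_m-A_k) & -B_k^{-1}C_k\\ I_m & 0\end{pmatrix}\in\mathbb C^{2m\times 2m}$ and the transfer matrix is $T(E)=t_n(E)\cdots t_1(E)$. The open-chain matrix $h\in\mathbb C^{nm\times nm}$ is the block tridiagonal matrix with diagonal blocks $h_{kk}=A_k$, superdiagonal blocks $h_{k,k+1}=B_k$, subdiagonal blocks $h_{k+1,k}=C_{k+1}$ ($k=1,\dots,n-1$), and all other blocks zero. *)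

theory Defs
  imports "Jordan_Normal_Form.Matrix" "Jordan_Normal_Form.Char_Poly"
begin

definition minv :: "complex mat \<Rightarrow> complex mat" where
  "minv A = (SOME B. B \<in> carrier_mat (dim_row A) (dim_row A) \<and> inverts_mat A B \<and> inverts_mat B A)"

definition tmat :: "nat \<Rightarrow> (nat \<Rightarrow> complex mat) \<Rightarrow> (nat \<Rightarrow> complex mat) \<Rightarrow> (nat \<Rightarrow> complex mat)
    \<Rightarrow> complex \<Rightarrow> nat \<Rightarrow> complex mat" where
  "tmat m A B C E k = four_block_mat
     (minv (B k) * (E \<cdot>\<^sub>m 1\<^sub>m m - A k)) (- (minv (B k) * C k))
     (1\<^sub>m m) (0\<^sub>m m m)"

fun Tprod :: "nat \<Rightarrow> (nat \<Rightarrow> complex mat) \<Rightarrow> (nat \<Rightarrow> complex mat) \<Rightarrow> (nat \<Rightarrow> complex mat)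
    \<Rightarrow> complex \<Rightarrow> nat \<Rightarrow> complex mat" where
  "Tprod m A B C E 0 = 1\<^sub>m (2 * m)"
| "Tprod m A B C E (Suc k) = tmat m A B C E (Suc k) * Tprod m A B C E k"

definition Tmat :: "nat \<Rightarrow> nat \<Rightarrow> (nat \<Rightarrow> complex mat) \<Rightarrow> (nat \<Rightarrow> complex mat) \<Rightarrow> (nat \<Rightarrow> complex mat)
    \<Rightarrow> complex \<Rightarrow> complex mat" where
  "Tmat n m A B C E = Tprod m A B C E n"

(* open-chain block tridiagonal matrix h (nm x nm); block indices k = 1..n,
   entry (i,j) lies in block (i div m + 1, j div m + 1) *)
definition hmat :: "nat \<Rightarrow> nat \<Rightarrow> (nat \<Rightarrow> complex mat) \<Rightarrow> (nat \<Rightarrow> complex mat) \<Rightarrow> (nat \<Rightarrow> complex mat)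
    \<Rightarrow> complex mat" where
  "hmat n m A B C = mat (n * m) (n * m) (\<lambda>(i, j).
     let bi = i div m; bj = j div m; r = i mod m; s = j mod m in
     if bi = bj then A (bi + 1) $$ (r, s)
     else if bj = bi + 1 then B (bi + 1) $$ (r, s)
     else if bi = bj + 1 then C (bi + 1) $$ (r, s)
     else 0)"

definition blk :: "nat \<Rightarrow> complex mat \<Rightarrow> nat \<Rightarrow> nat \<Rightarrow> complex mat" where
  "blk m G i j = mat m m (\<lambda>(r, s). G $$ ((i - 1) * m + r, (j - 1) * m + s))"

end

theory Submission
  imports Defs
begin

lemma minv_props:
  assumes A: "A \<in> carrier_mat k k" and inv: "invertible_mat A"
  shows "minv A \<in> carrier_mat k k" "A * minv A = 1\<^sub>m k" "minv A * A = 1\<^sub>m k"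
proof -
  from inv obtain B where AB: "inverts_mat A B" and BA: "inverts_mat B A"
    unfolding invertible_mat_def by auto
  have "dim_col (A * B) = k" using AB A unfolding inverts_mat_def by simp
  hence c: "dim_col B = k" by simp
  have "dim_row (B * A) = dim_row B" by simp
  have "dim_col (B * A) = k" using A by simp
  hence "dim_row B = k" using BA unfolding inverts_mat_def by simp
  hence Bc: "B \<in> carrier_mat k k" using c by auto
  have ex: "\<exists>B. B \<in> carrier_mat (dim_row A) (dim_row A) \<and> inverts_mat A B \<and> inverts_mat B A"
    using Bc AB BA A by auto
  have *: "minv A \<in> carrier_mat (dim_row A) (dim_row A) \<and> inverts_mat A (minv A) \<and> inverts_mat (minv A) A"
    unfolding minv_def by (rule someI_ex[OF ex])
  thus "minv A \<in> carrier_mat k k" "A * minv A = 1\<^sub>m k" "minv A * A = 1\<^sub>m k"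
    using A unfolding inverts_mat_def by auto
qed

lemma left_inv_invertible:
  assumes A: "(A::complex mat) \<in> carrier_mat k k" and B: "B \<in> carrier_mat k k" and BA: "B * A = 1\<^sub>m k"
  shows "invertible_mat A"
proof -
  have "A * B = 1\<^sub>m k" by (rule mat_mult_left_right_inverse[OF B A BA])
  thus ?thesis unfolding invertible_mat_def inverts_mat_def using A B BA by auto
qed

lemma det_invertible:
  assumes A: "(A::complex mat) \<in> carrier_mat k k" and d: "det A \<noteq> 0"
  shows "invertible_mat A"
proof -
  have "A \<in> Units (ring_mat TYPE(complex) k undefined)" by (rule det_non_zero_imp_unit[OF A d])
  then obtain B where B: "B \<in> carrier_mat k k" "B * A = 1\<^sub>m k"
    unfolding Units_def ring_mat_def by auto
  thus ?thesis using left_inv_invertible A by blast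
qed

lemma sum_blocks: "(\<Sum>l\<in>{0..<n*m}. f l) = (\<Sum>b\<in>{0..<n}. \<Sum>t\<in>{0..<m}. f (b*m+t::nat))"
proof -
  have "(\<Sum>l\<in>{0..<n*m}. f l) = (\<Sum>b\<in>{0..<n}. sum f {b*m..<b*m+m})"
    using sum.nat_group[of f m n] by (simp add: lessThan_atLeast0)
  also have "\<dots> = (\<Sum>b\<in>{0..<n}. \<Sum>t\<in>{0..<m}. f (b*m+t))"
  proof (rule sum.cong[OF refl])
    fix b show "sum f {b * m..<b * m + m} = (\<Sum>t = 0..<m. f (b * m + t))"
      using sum.shift_bounds_nat_ivl[of f 0 "b*m" m] by (simp add: add.commute)
  qed
  finally show ?thesis .
qed


lemma hmat_entry:
  assumes "m > 0" "k \<ge> 1" "r < m" "t < m" "(k-1)*m + r < n*m" "b*m+t < n*m"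
  shows "hmat n m A B C $$ ((k-1)*m + r, b*m + t) =
     (if b + 1 = k then A k $$ (r,t) else if b = k then B k $$ (r,t)
      else if b + 2 = k then C k $$ (r,t) else 0)"
proof -
  have d1: "((k-1)*m + r) div m = k - 1" "((k-1)*m + r) mod m = r" using assms by auto
  have d2: "(b*m + t) div m = b" "(b*m + t) mod m = t" using assms by auto
  show ?thesis unfolding hmat_def index_mat(1)[OF assms(5) assms(6)] prod.case Let_def d1 d2
    using assms by auto
qed


lemma blk_carrier[simp]: "blk m G i j \<in> carrier_mat m m"
  unfolding blk_def by auto

lemma blk_dims[simp]: "dim_row (blk m G i j) = m" "dim_col (blk m G i j) = m"
  unfolding blk_def by auto

lemma blk_index: "r < m \<Longrightarrow> s < m \<Longrightarrow> blk m G i j $$ (r,s) = G $$ ((i - 1) * m + r, (j - 1) * m + s)"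
  unfolding blk_def by auto

lemma mult_entry: "X \<in> carrier_mat m m \<Longrightarrow> Y \<in> carrier_mat m m \<Longrightarrow> r < m \<Longrightarrow> s < m \<Longrightarrow>
  (X * Y) $$ (r,s) = (\<Sum>t\<in>{0..<m}. X $$ (r,t) * Y $$ (t,s))"
  by (simp add: scalar_prod_def)

lemma block_row:
  fixes A B C :: "nat \<Rightarrow> complex mat"
  assumes m: "m > 0" and k: "k \<in> {1..n}" and j: "j \<in> {1..n}"
    and cA: "\<And>k. k \<in> {1..n} \<Longrightarrow> A k \<in> carrier_mat m m"
    and cB: "\<And>k. k \<in> {1..n} \<Longrightarrow> B k \<in> carrier_mat m m"
    and cC: "\<And>k. k \<in> {1..n} \<Longrightarrow> C k \<in> carrier_mat m m"
    and G: "G \<in> carrier_mat (n*m) (n*m)"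
    and HG: "(hmat n m A B C - E \<cdot>\<^sub>m 1\<^sub>m (n*m)) * G = 1\<^sub>m (n*m)"
  shows "(if 2 \<le> k then C k * blk m G (k-1) j else 0\<^sub>m m m) + (A k - E \<cdot>\<^sub>m 1\<^sub>m m) * blk m G k j
     + (if k < n then B k * blk m G (k+1) j else 0\<^sub>m m m) = (if k = j then 1\<^sub>m m else 0\<^sub>m m m)"
proof (rule eq_matI)
  let ?H = "hmat n m A B C - E \<cdot>\<^sub>m 1\<^sub>m (n*m)"
  let ?A = "A k - E \<cdot>\<^sub>m 1\<^sub>m m"
  have Ak: "A k \<in> carrier_mat m m" "B k \<in> carrier_mat m m" "C k \<in> carrier_mat m m"
    using cA cB cC k by auto
  have cAE: "?A \<in> carrier_mat m m" using Ak by auto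
  have dimh: "hmat n m A B C \<in> carrier_mat (n*m) (n*m)" unfolding hmat_def by auto
  fix r s assume r: "r < dim_row (if k = j then 1\<^sub>m m else 0\<^sub>m m m)"
    and s: "s < dim_col (if k = j then 1\<^sub>m m else 0\<^sub>m m m)"
  hence r: "r < m" and s: "s < m" by (auto split: if_splits)
  define i where "i = (k-1)*m + r"
  define c where "c = (j-1)*m + s"
  have kn: "k - 1 < n" "j - 1 < n" using k j by auto
  have "(k-1)*m + r < (k-1)*m + m" using r by simp
  also have "\<dots> = k * m" using k by (cases k) auto
  also have "\<dots> \<le> n * m" using k by auto
  finally have i: "i < n*m" unfolding i_def .
  have "(j-1)*m + s < (j-1)*m + m" using s by simp
  also have "\<dots> = j * m" using j by (cases j) auto
  also have "\<dots> \<le> n * m" using j by auto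
  finally have c: "c < n*m" unfolding c_def .
  define X1 where "X1 = (\<Sum>t\<in>{0..<m}. ?A $$ (r,t) * G $$ ((k-1)*m+t, c))"
  define X2 where "X2 = (\<Sum>t\<in>{0..<m}. B k $$ (r,t) * G $$ (k*m+t, c))"
  define X3 where "X3 = (\<Sum>t\<in>{0..<m}. C k $$ (r,t) * G $$ ((k-2)*m+t, c))"
  have inner: "(\<Sum>t\<in>{0..<m}. ?H $$ (i,b*m+t) * G $$ (b*m+t,c)) =
     (if b = k-1 then X1 else 0) + (if b = k then X2 else 0) + (if b = k-2 then (if 2 \<le> k then X3 else 0) else 0)"
    if b: "b < n" for b
  proof -
    have Hent: "?H $$ (i,b*m+t) = (if b+1=k then ?A $$ (r,t) else if b = k then B k $$ (r,t)
         else if b+2=k then C k $$ (r,t) else 0)" if t: "t < m" for t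
    proof -
      have bt: "b*m+t < n*m"
      proof -
        have "b*m+t < b*m+m" using t by simp
        also have "\<dots> = Suc b * m" by simp
        also have "\<dots> \<le> n*m" using b by (intro mult_right_mono) auto
        finally show ?thesis .
      qed
      have he: "hmat n m A B C $$ (i, b*m+t) = (if b + 1 = k then A k $$ (r,t) else if b = k then B k $$ (r,t)
        else if b + 2 = k then C k $$ (r,t) else 0)"
        unfolding i_def by (rule hmat_entry, insert m k r t i bt, auto simp: i_def)
      have ieq: "(i = b*m+t) = (b + 1 = k \<and> r = t)"
      proof
        assume "i = b*m+t"
        hence "i div m = b" "i mod m = t" using t by auto
        moreover have "i div m = k - 1" "i mod m = r" using r unfolding i_def by auto
        ultimately show "b + 1 = k \<and> r = t" using k by auto
      next
        assume "b + 1 = k \<and> r = t" thus "i = b*m+t" unfolding i_def by auto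
      qed
      show ?thesis using dimh i bt Ak r t by (auto simp: he ieq)
    qed
    show ?thesis
    proof (cases "b + 1 = k")
      case True
      hence "b = k - 1" "b \<noteq> k" "b + 2 \<noteq> k" by auto
      moreover have "b = k - 2 \<Longrightarrow> \<not> 2 \<le> k" using True by auto
      ultimately show ?thesis unfolding X1_def using Hent True
        by (auto intro!: sum.cong)
    next
      case F1: False
      hence b1: "b \<noteq> k - 1" using k by auto
      show ?thesis
      proof (cases "b = k")
        case True
        thus ?thesis unfolding X2_def using Hent F1 b1 by (auto intro!: sum.cong)
      next
        case F2: False
        show ?thesis
        proof (cases "b + 2 = k")
          case True
          hence "b = k - 2" "2 \<le> k" by auto
          thus ?thesis unfolding X3_def using Hent F1 F2 b1 True by (auto intro!: sum.cong)
        next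
          case F3: False
          hence "b \<noteq> k - 2 \<or> \<not> 2 \<le> k" by auto
          thus ?thesis using Hent F1 F2 F3 b1 by auto
        qed
      qed
    qed
  qed
  have "(?H * G) $$ (i,c) = (\<Sum>l\<in>{0..<n*m}. ?H $$ (i,l) * G $$ (l,c))"
    using dimh G i c by (simp add: scalar_prod_def)
  also have "\<dots> = (\<Sum>b\<in>{0..<n}. \<Sum>t\<in>{0..<m}. ?H $$ (i,b*m+t) * G $$ (b*m+t,c))"
    by (rule sum_blocks)
  also have "\<dots> = (\<Sum>b\<in>{0..<n}. (if b = k-1 then X1 else 0) + (if b = k then X2 else 0) + (if b = k-2 then (if 2 \<le> k then X3 else 0) else 0))"
    by (rule sum.cong, simp, rule inner, simp)
  also have "\<dots> = X1 + (if k < n then X2 else 0) + (if 2 \<le> k then X3 else 0)"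
    using kn k by (simp add: sum.distrib, arith)
  finally have main: "(?H * G) $$ (i,c) = X1 + (if k < n then X2 else 0) + (if 2 \<le> k then X3 else 0)" .
  have rhs: "(?H * G) $$ (i,c) = (if k = j then 1\<^sub>m m else 0\<^sub>m m m) $$ (r,s)"
  proof -
    have "(i = c) = (k = j \<and> r = s)"
    proof
      assume "i = c"
      hence "i div m = c div m" "i mod m = c mod m" by auto
      moreover have "i div m = k - 1" "i mod m = r" using r unfolding i_def by auto
      moreover have "c div m = j - 1" "c mod m = s" using s unfolding c_def by auto
      ultimately show "k = j \<and> r = s" using k j by auto
    qed (auto simp: i_def c_def)
    thus ?thesis unfolding HG using i c r s by auto
  qed
  have e1: "(?A * blk m G k j) $$ (r,s) = X1"
    unfolding X1_def c_def by (simp add: mult_entry[OF cAE blk_carrier r s], intro sum.cong refl, simp add: blk_index s numeral_2_eq_2)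
  have e2: "(B k * blk m G (Suc k) j) $$ (r,s) = X2"
    unfolding X2_def c_def by (simp add: mult_entry[OF Ak(2) blk_carrier r s], intro sum.cong refl, simp add: blk_index s numeral_2_eq_2)
  have e3: "(C k * blk m G (k - Suc 0) j) $$ (r,s) = X3"
    unfolding X3_def c_def by (simp add: mult_entry[OF Ak(3) blk_carrier r s], intro sum.cong refl, simp add: blk_index s numeral_2_eq_2)
  show "((if 2 \<le> k then C k * blk m G (k-1) j else 0\<^sub>m m m) + ?A * blk m G k j
     + (if k < n then B k * blk m G (k+1) j else 0\<^sub>m m m)) $$ (r,s) = (if k = j then 1\<^sub>m m else 0\<^sub>m m m) $$ (r,s)"
    unfolding rhs[symmetric] main
    using r s Ak by (cases "2 \<le> k"; cases "k < n") (simp_all add: e1 e2 e3 carrier_matD[OF Ak(1)] carrier_matD[OF Ak(2)] carrier_matD[OF Ak(3)] carrier_matD[OF blk_carrier] del: index_mult_mat(1))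
next
  show "dim_row ((if 2 \<le> k then C k * blk m G (k-1) j else 0\<^sub>m m m) + (A k - E \<cdot>\<^sub>m 1\<^sub>m m) * blk m G k j
     + (if k < n then B k * blk m G (k+1) j else 0\<^sub>m m m)) = dim_row (if k = j then 1\<^sub>m m else 0\<^sub>m m m)"
    using cA cB cC k by auto
  show "dim_col ((if 2 \<le> k then C k * blk m G (k-1) j else 0\<^sub>m m m) + (A k - E \<cdot>\<^sub>m 1\<^sub>m m) * blk m G k j
     + (if k < n then B k * blk m G (k+1) j else 0\<^sub>m m m)) = dim_col (if k = j then 1\<^sub>m m else 0\<^sub>m m m)"
    using cA cB cC k by auto
qed


lemma rec_step:
  fixes Ak Bk Ck X0 X1 X2 :: "complex mat"
  assumes c: "Ak \<in> carrier_mat m m" "Bk \<in> carrier_mat m m" "Ck \<in> carrier_mat m m"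
    "X0 \<in> carrier_mat m m" "X1 \<in> carrier_mat m m" "X2 \<in> carrier_mat m m"
    and inv: "invertible_mat Bk"
    and eq: "Ck * X0 + (Ak - E \<cdot>\<^sub>m 1\<^sub>m m) * X1 + Bk * X2 = 0\<^sub>m m m"
  shows "minv Bk * (E \<cdot>\<^sub>m 1\<^sub>m m - Ak) * X1 + (- (minv Bk * Ck)) * X0 = X2"
proof -
  note mi = minv_props[OF c(2) inv]
  have key: "(E \<cdot>\<^sub>m 1\<^sub>m m - Ak) * X1 - Ck * X0 = Bk * X2"
  proof -
    have "(E \<cdot>\<^sub>m 1\<^sub>m m - Ak) = - (Ak - E \<cdot>\<^sub>m 1\<^sub>m m)"
      by (rule eq_matI, insert c, auto)
    hence e1: "(E \<cdot>\<^sub>m 1\<^sub>m m - Ak) * X1 = - ((Ak - E \<cdot>\<^sub>m 1\<^sub>m m) * X1)"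
      using c by simp
    show ?thesis unfolding e1
    proof (rule eq_matI)
      fix i j assume ij: "i < dim_row (Bk * X2)" "j < dim_col (Bk * X2)"
      hence ij': "i < m" "j < m" using c by auto
      have "(Ck * X0 + (Ak - E \<cdot>\<^sub>m 1\<^sub>m m) * X1 + Bk * X2) $$ (i,j) = 0"
        unfolding eq using ij' by simp
      hence "(Ck * X0) $$ (i,j) + ((Ak - E \<cdot>\<^sub>m 1\<^sub>m m) * X1) $$ (i,j) + (Bk * X2) $$ (i,j) = 0"
        using ij' c by (simp del: index_mult_mat(1))
      thus "(- ((Ak - E \<cdot>\<^sub>m 1\<^sub>m m) * X1) - Ck * X0) $$ (i, j) = (Bk * X2) $$ (i, j)"
        using ij' c by (simp del: index_mult_mat(1)) (simp add: algebra_simps)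
    qed (insert c, auto)
  qed
  have "minv Bk * (E \<cdot>\<^sub>m 1\<^sub>m m - Ak) * X1 + (- (minv Bk * Ck)) * X0
      = minv Bk * ((E \<cdot>\<^sub>m 1\<^sub>m m - Ak) * X1) - minv Bk * (Ck * X0)"
  proof -
    have "- (minv Bk * Ck) * X0 = - (minv Bk * (Ck * X0))"
      using c mi by (subst uminus_mult_left_mat, auto)
    moreover have "minv Bk * (E \<cdot>\<^sub>m 1\<^sub>m m - Ak) * X1 = minv Bk * ((E \<cdot>\<^sub>m 1\<^sub>m m - Ak) * X1)"
      using c mi by (intro assoc_mult_mat[of _ m m _ m _ m]) auto
    moreover have "minv Bk * ((E \<cdot>\<^sub>m 1\<^sub>m m - Ak) * X1) - minv Bk * (Ck * X0)
       = minv Bk * ((E \<cdot>\<^sub>m 1\<^sub>m m - Ak) * X1) + - (minv Bk * (Ck * X0))"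
      using c mi by (intro minus_add_uminus_mat[of _ m m]) auto
    ultimately show ?thesis by simp
  qed
  also have "\<dots> = minv Bk * ((E \<cdot>\<^sub>m 1\<^sub>m m - Ak) * X1 - Ck * X0)"
    using c mi by (subst mult_minus_distrib_mat[of _ m m _ m], auto)
  also have "\<dots> = minv Bk * (Bk * X2)" unfolding key ..
  also have "\<dots> = X2" using c mi by (subst assoc_mult_mat[symmetric, of _ m m _ m _ m], auto)
  finally show ?thesis .
qed


lemma combine:
  fixes P Q R P' R' D :: "complex mat"
  assumes c: "P \<in> carrier_mat m m" "Q \<in> carrier_mat m m" "R \<in> carrier_mat m m"
    "P' \<in> carrier_mat m m" "R' \<in> carrier_mat m m" "D \<in> carrier_mat m m"
    and eq: "P + Q + R = D"
    and en: "\<And>i j. i < m \<Longrightarrow> j < m \<Longrightarrow> P' $$ (i,j) + R' $$ (i,j) = P $$ (i,j) + R $$ (i,j) - D $$ (i,j)"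
  shows "P' + Q + R' = 0\<^sub>m m m"
proof (rule eq_matI)
  fix i j assume "i < dim_row (0\<^sub>m m m :: complex mat)" "j < dim_col (0\<^sub>m m m :: complex mat)"
  hence ij: "i < m" "j < m" by auto
  have "(P + Q + R) $$ (i,j) = D $$ (i,j)" using eq by simp
  hence h: "P $$ (i,j) + Q $$ (i,j) + R $$ (i,j) = D $$ (i,j)" using c ij by (simp add: add.assoc)
  have "(P' + Q + R') $$ (i,j) = (P' $$ (i,j) + R' $$ (i,j)) + Q $$ (i,j)" using c ij by simp
  also have "\<dots> = P $$ (i,j) + R $$ (i,j) - D $$ (i,j) + Q $$ (i,j)" using en[OF ij] by simp
  also have "\<dots> = 0" unfolding h[symmetric] by simp
  finally show "(P' + Q + R') $$ (i,j) = 0\<^sub>m m m $$ (i,j)" using ij by simp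
qed (insert c, auto)

lemma four_block_eq:
  fixes A B C D A' B' C' D' :: "complex mat"
  assumes c: "A \<in> carrier_mat m m" "B \<in> carrier_mat m m" "C \<in> carrier_mat m m" "D \<in> carrier_mat m m"
    "A' \<in> carrier_mat m m" "B' \<in> carrier_mat m m" "C' \<in> carrier_mat m m" "D' \<in> carrier_mat m m"
    and eq: "four_block_mat A B C D = four_block_mat A' B' C' D'"
  shows "A = A'" "B = B'" "C = C'" "D = D'"
proof -
  have e: "four_block_mat A B C D $$ (i,j) = four_block_mat A' B' C' D' $$ (i,j)" for i j
    using eq by simp
  show "A = A'"
  proof (rule eq_matI)
    fix i j assume "i < dim_row A'" "j < dim_col A'"
    thus "A $$ (i,j) = A' $$ (i,j)" using e[of i j] c by auto
  qed (insert c, auto)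
  show "B = B'"
  proof (rule eq_matI)
    fix i j assume "i < dim_row B'" "j < dim_col B'"
    thus "B $$ (i,j) = B' $$ (i,j)" using e[of i "j+m"] c by auto
  qed (insert c, auto)
  show "C = C'"
  proof (rule eq_matI)
    fix i j assume "i < dim_row C'" "j < dim_col C'"
    thus "C $$ (i,j) = C' $$ (i,j)" using e[of "i+m" j] c by auto
  qed (insert c, auto)
  show "D = D'"
  proof (rule eq_matI)
    fix i j assume "i < dim_row D'" "j < dim_col D'"
    thus "D $$ (i,j) = D' $$ (i,j)" using e[of "i+m" "j+m"] c by auto
  qed (insert c, auto)
qed

lemma tmat_carrier:
  assumes "A k \<in> carrier_mat m m" "B k \<in> carrier_mat m m" "C k \<in> carrier_mat m m" "invertible_mat (B k)"
  shows "tmat m A B C E k \<in> carrier_mat (2*m) (2*m)"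
proof -
  note mi = minv_props[OF assms(2,4)]
  have "tmat m A B C E k \<in> carrier_mat (m+m) (m+m)"
    unfolding tmat_def using mi assms by (intro four_block_carrier_mat) auto
  thus ?thesis by (simp add: mult_2)
qed

lemma Tprod_carrier:
  assumes "\<And>k. k \<in> {1..n} \<Longrightarrow> A k \<in> carrier_mat m m"
    and "\<And>k. k \<in> {1..n} \<Longrightarrow> B k \<in> carrier_mat m m"
    and "\<And>k. k \<in> {1..n} \<Longrightarrow> C k \<in> carrier_mat m m"
    and "\<And>k. k \<in> {1..n} \<Longrightarrow> invertible_mat (B k)"
  shows "k \<le> n \<Longrightarrow> Tprod m A B C E k \<in> carrier_mat (2*m) (2*m)"
proof (induction k)
  case 0 thus ?case by simp
next
  case (Suc k)
  have "tmat m A B C E (Suc k) \<in> carrier_mat (2*m) (2*m)"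
    using Suc.prems assms by (intro tmat_carrier) auto
  thus ?case using Suc by simp
qed

theorem proposition5:
  fixes m n :: nat and A B C :: "nat \<Rightarrow> complex mat" and E :: complex
  assumes "m \<ge> 1" and "n \<ge> 2"
    and "\<And>k. k \<in> {1..n} \<Longrightarrow> A k \<in> carrier_mat m m"
    and "\<And>k. k \<in> {1..n} \<Longrightarrow> B k \<in> carrier_mat m m"
    and "\<And>k. k \<in> {1..n} \<Longrightarrow> C k \<in> carrier_mat m m"
    and "\<And>k. k \<in> {1..n} \<Longrightarrow> invertible_mat (B k)"
    and "\<And>k. k \<in> {1..n} \<Longrightarrow> invertible_mat (C k)"
    and "\<not> eigenvalue (hmat n m A B C) E"
  defines "g \<equiv> minv (hmat n m A B C - E \<cdot>\<^sub>m 1\<^sub>m (n * m))"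
  shows "four_block_mat (0\<^sub>m m m) (- minv (B n)) (blk m g n 1) (blk m g n n)
           = Tmat n m A B C E * four_block_mat (blk m g 1 1) (blk m g 1 n) (- minv (C 1)) (0\<^sub>m m m)
         \<and> invertible_mat (blk m g 1 n)
         \<and> Tmat n m A B C E = four_block_mat
           (- (minv (B n) * minv (blk m g 1 n)))
           (- (minv (B n) * minv (blk m g 1 n) * blk m g 1 1 * C 1))
           (blk m g n n * minv (blk m g 1 n))
           (blk m g n n * minv (blk m g 1 n) * blk m g 1 1 * C 1 - blk m g n 1 * C 1)"
proof -
  have m: "m > 0" using assms(1) by simp
  note cA = assms(3) and cB = assms(4) and cC = assms(5) and iB = assms(6) and iC = assms(7)
  have n1: "1 \<in> {1..n}" "n \<in> {1..n}" using assms(2) by auto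
  let ?h = "hmat n m A B C"
  let ?H = "?h - E \<cdot>\<^sub>m 1\<^sub>m (n*m)"
  have ch: "?h \<in> carrier_mat (n*m) (n*m)" unfolding hmat_def by auto
  hence cH: "?H \<in> carrier_mat (n*m) (n*m)" by auto
  have "char_matrix ?h E = ?H" unfolding char_matrix_def by (rule eq_matI) (insert ch, auto)
  hence "det ?H \<noteq> 0" using assms(8) eigenvalue_det[OF ch] by simp
  hence invH: "invertible_mat ?H" by (rule det_invertible[OF cH])
  note gp = minv_props[OF cH invH, folded g_def]
  have cg: "g \<in> carrier_mat (n*m) (n*m)" and Hg: "?H * g = 1\<^sub>m (n*m)" using gp by auto
  note BR = block_row[OF m _ _ cA cB cC cg Hg]
  have mB: "minv (B k) \<in> carrier_mat m m" "B k * minv (B k) = 1\<^sub>m m" "minv (B k) * B k = 1\<^sub>m m"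
    if "k \<in> {1..n}" for k using minv_props[OF cB[OF that] iB[OF that]] by auto
  have mC: "minv (C k) \<in> carrier_mat m m" "C k * minv (C k) = 1\<^sub>m m" "minv (C k) * C k = 1\<^sub>m m"
    if "k \<in> {1..n}" for k using minv_props[OF cC[OF that] iC[OF that]] by auto
  define Xc where "Xc j k = (if k = 0 then (if j = 1 then - minv (C 1) else 0\<^sub>m m m)
     else if k = Suc n then (if j = n then - minv (B n) else 0\<^sub>m m m) else blk m g k j)" for j k
  have cX: "Xc j k \<in> carrier_mat m m" for j k
    unfolding Xc_def using mB(1)[OF n1(2)] mC(1)[OF n1(1)] by auto
  have X0: "C 1 * Xc j 0 = (if j = 1 then - 1\<^sub>m m else 0\<^sub>m m m)" for j
    unfolding Xc_def using mC[OF n1(1)] cC[OF n1(1)] by auto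
  have Xn: "B n * Xc j (Suc n) = (if j = n then - 1\<^sub>m m else 0\<^sub>m m m)" for j
    unfolding Xc_def using mB[OF n1(2)] cB[OF n1(2)] by auto
  have Xmid: "1 \<le> k \<Longrightarrow> k \<le> n \<Longrightarrow> Xc j k = blk m g k j" for j k
    unfolding Xc_def by auto
  have recur: "C k * Xc j (k-1) + (A k - E \<cdot>\<^sub>m 1\<^sub>m m) * Xc j k + B k * Xc j (Suc k) = 0\<^sub>m m m"
    if k: "k \<in> {1..n}" and j: "j = 1 \<or> j = n" for k j
  proof -
    have jn: "j \<in> {1..n}" using j n1 by auto
    have ck: "A k \<in> carrier_mat m m" "B k \<in> carrier_mat m m" "C k \<in> carrier_mat m m"
      using cA cB cC k by auto
    note br = BR[OF k jn]
    have xk: "Xc j k = blk m g k j" using k by (intro Xmid) auto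
    show ?thesis unfolding xk
    proof (rule combine[OF _ _ _ _ _ _ br])
      fix i l assume il: "i < m" "l < m"
      consider (a) "k = 1" | (b) "k = n" | (c) "2 \<le> k" "k < n" using k assms(2) by force
      thus "(C k * Xc j (k - 1)) $$ (i, l) + (B k * Xc j (Suc k)) $$ (i, l) =
          (if 2 \<le> k then C k * blk m g (k - 1) j else 0\<^sub>m m m) $$ (i, l) +
          (if k < n then B k * blk m g (k + 1) j else 0\<^sub>m m m) $$ (i, l) -
          (if k = j then 1\<^sub>m m else 0\<^sub>m m m) $$ (i, l)"
      proof cases
        case a
        have "Xc j (Suc k) = blk m g (Suc k) j" using a assms(2) by (intro Xmid) auto
        thus ?thesis using a X0[of j] j il ck assms(2) by (auto simp del: index_mult_mat(1))
      next
        case b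
        have "Xc j (k-1) = blk m g (k-1) j" using b assms(2) by (intro Xmid) auto
        thus ?thesis using b Xn[of j] j il ck assms(2) by (auto simp del: index_mult_mat(1))
      next
        case c
        have "Xc j (Suc k) = blk m g (Suc k) j" "Xc j (k-1) = blk m g (k-1) j"
          using c by (intro Xmid, auto)+
        thus ?thesis using c j il ck assms(2) by (auto simp del: index_mult_mat(1))
      qed
    qed (insert ck cX, auto)
  qed
  define S where "S k = four_block_mat (Xc 1 (Suc k)) (Xc n (Suc k)) (Xc 1 k) (Xc n k)" for k
  have cS: "S k \<in> carrier_mat (2*m) (2*m)" for k
  proof -
    have "S k \<in> carrier_mat (m+m) (m+m)" unfolding S_def using cX by auto
    thus ?thesis by (simp add: mult_2)
  qed
  have step: "tmat m A B C E k * S (k-1) = S k" if k: "k \<in> {1..n}" for k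
  proof -
    have ck: "A k \<in> carrier_mat m m" "B k \<in> carrier_mat m m" "C k \<in> carrier_mat m m"
      using cA cB cC k by auto
    note mk = mB[OF k]
    have sk: "Suc (k-1) = k" using k by auto
    have cP: "minv (B k) * (E \<cdot>\<^sub>m 1\<^sub>m m - A k) \<in> carrier_mat m m" "- (minv (B k) * C k) \<in> carrier_mat m m"
      using mk ck by auto
    have "tmat m A B C E k * S (k-1) = four_block_mat
       (minv (B k) * (E \<cdot>\<^sub>m 1\<^sub>m m - A k) * Xc 1 k + - (minv (B k) * C k) * Xc 1 (k-1))
       (minv (B k) * (E \<cdot>\<^sub>m 1\<^sub>m m - A k) * Xc n k + - (minv (B k) * C k) * Xc n (k-1))
       (1\<^sub>m m * Xc 1 k + 0\<^sub>m m m * Xc 1 (k-1)) (1\<^sub>m m * Xc n k + 0\<^sub>m m m * Xc n (k-1))"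
      unfolding tmat_def S_def sk by (rule mult_four_block_mat[OF cP one_carrier_mat zero_carrier_mat cX cX cX cX])
    also have "\<dots> = S k" unfolding S_def
    proof (rule cong_four_block_mat)
      show "minv (B k) * (E \<cdot>\<^sub>m 1\<^sub>m m - A k) * Xc 1 k + - (minv (B k) * C k) * Xc 1 (k - 1) = Xc 1 (Suc k)"
        by (rule rec_step[OF ck cX cX cX iB[OF k] recur[OF k]]) simp
      show "minv (B k) * (E \<cdot>\<^sub>m 1\<^sub>m m - A k) * Xc n k + - (minv (B k) * C k) * Xc n (k - 1) = Xc n (Suc k)"
        by (rule rec_step[OF ck cX cX cX iB[OF k] recur[OF k]]) simp
      show "1\<^sub>m m * Xc 1 k + 0\<^sub>m m m * Xc 1 (k - 1) = Xc 1 k" using cX[of 1 k] cX[of 1 "k-1"] by simp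
      show "1\<^sub>m m * Xc n k + 0\<^sub>m m m * Xc n (k - 1) = Xc n k" using cX[of n k] cX[of n "k-1"] by simp
    qed
    finally show ?thesis .
  qed
  have TS: "Tprod m A B C E k * S 0 = S k" if "k \<le> n" for k
    using that
  proof (induction k)
    case 0 show ?case using cS[of 0] by simp
  next
    case (Suc k)
    have ct: "tmat m A B C E (Suc k) \<in> carrier_mat (2*m) (2*m)"
      using Suc.prems cA cB cC iB by (intro tmat_carrier) auto
    have cT: "Tprod m A B C E k \<in> carrier_mat (2*m) (2*m)"
      using Suc.prems by (intro Tprod_carrier[OF cA cB cC iB]) auto
    have "Tprod m A B C E (Suc k) * S 0 = tmat m A B C E (Suc k) * (Tprod m A B C E k * S 0)"
      using ct cT cS[of 0] by simp
    also have "\<dots> = S (Suc k)" using Suc step[of "Suc k"] by simp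
    finally show ?case .
  qed
  have S0: "S 0 = four_block_mat (blk m g 1 1) (blk m g 1 n) (- minv (C 1)) (0\<^sub>m m m)"
    unfolding S_def Xc_def using assms(2) by auto
  have Sn: "S n = four_block_mat (0\<^sub>m m m) (- minv (B n)) (blk m g n 1) (blk m g n n)"
    unfolding S_def Xc_def using assms(2) by auto
  have part1: "four_block_mat (0\<^sub>m m m) (- minv (B n)) (blk m g n 1) (blk m g n n)
           = Tmat n m A B C E * four_block_mat (blk m g 1 1) (blk m g 1 n) (- minv (C 1)) (0\<^sub>m m m)"
    unfolding Tmat_def S0[symmetric] Sn[symmetric] using TS[of n] by simp
  define T where "T = Tmat n m A B C E"
  have cT: "T \<in> carrier_mat (m+m) (m+m)"
    unfolding T_def Tmat_def using Tprod_carrier[OF cA cB cC iB, of n] by (simp add: mult_2)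
  obtain T11 T12 T21 T22 where sb: "split_block T m m = (T11,T12,T21,T22)" by (cases "split_block T m m") auto
  note spl = split_block[OF sb, of m m] 
  have c11: "T11 \<in> carrier_mat m m" "T12 \<in> carrier_mat m m" "T21 \<in> carrier_mat m m" "T22 \<in> carrier_mat m m"
    and Tsp: "T = four_block_mat T11 T12 T21 T22" using spl cT by auto
  let ?g11 = "blk m g 1 1" and ?g1n = "blk m g 1 n" and ?gn1 = "blk m g n 1" and ?gnn = "blk m g n n"
  note mBn = mB[OF n1(2)] and mC1 = mC[OF n1(1)]
  have cBn: "B n \<in> carrier_mat m m" and cC1: "C 1 \<in> carrier_mat m m" using cB cC n1 by auto
  have "four_block_mat (0\<^sub>m m m) (- minv (B n)) ?gn1 ?gnn
     = four_block_mat (T11 * ?g11 + T12 * - minv (C 1)) (T11 * ?g1n + T12 * 0\<^sub>m m m)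
        (T21 * ?g11 + T22 * - minv (C 1)) (T21 * ?g1n + T22 * 0\<^sub>m m m)"
    unfolding part1 T_def[symmetric] Tsp
    by (rule mult_four_block_mat[OF c11 blk_carrier blk_carrier _ zero_carrier_mat], insert mC1, auto)
  hence "- minv (B n) = T11 * ?g1n + T12 * 0\<^sub>m m m"
    by (rule four_block_eq(2)[rotated 8]) (insert c11 mC1 mBn, auto)
  hence T11g: "T11 * ?g1n = - minv (B n)" using c11 by simp
  have "(- B n * T11) * ?g1n = 1\<^sub>m m"
  proof -
    have "(- B n * T11) * ?g1n = - B n * (T11 * ?g1n)" using cBn c11 by (intro assoc_mult_mat) auto
    also have "\<dots> = - B n * - minv (B n)" unfolding T11g ..
    also have "\<dots> = B n * minv (B n)" using cBn mBn by simp
    finally show ?thesis using mBn by simp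
  qed
  hence inv1n: "invertible_mat ?g1n" using cBn c11 by (intro left_inv_invertible[of _ m "- B n * T11"]) auto
  note mg = minv_props[OF blk_carrier[of m g 1 n] inv1n]
  have cg: "?g11 \<in> carrier_mat m m" "?g1n \<in> carrier_mat m m" "?gn1 \<in> carrier_mat m m" "?gnn \<in> carrier_mat m m"
    by auto
  let ?X = "minv ?g1n * ?g11 * C 1"
  have cXX: "?X \<in> carrier_mat m m" using mg cC1 by auto
  have gX: "?g1n * ?X = ?g11 * C 1"
  proof -
    have "?g1n * ?X = ?g1n * (minv ?g1n * (?g11 * C 1))" by (rule arg_cong[where f="\<lambda>x. ?g1n * x"], rule assoc_mult_mat[OF mg(1) blk_carrier cC1])
    also have "\<dots> = (?g1n * minv ?g1n) * (?g11 * C 1)" using mg cC1 cg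
      by (intro assoc_mult_mat[symmetric]) auto
    also have "\<dots> = ?g11 * C 1" using mg cC1 cg by simp
    finally show ?thesis .
  qed
  define M where "M = four_block_mat (0\<^sub>m m m) (- C 1) (minv ?g1n) ?X"
  have "four_block_mat ?g11 ?g1n (- minv (C 1)) (0\<^sub>m m m) * M =
     four_block_mat (?g11 * 0\<^sub>m m m + ?g1n * minv ?g1n) (?g11 * - C 1 + ?g1n * ?X)
       (- minv (C 1) * 0\<^sub>m m m + 0\<^sub>m m m * minv ?g1n) (- minv (C 1) * - C 1 + 0\<^sub>m m m * ?X)"
    unfolding M_def by (rule mult_four_block_mat, insert cg mC1 mg cC1 cXX, auto)
  also have "\<dots> = four_block_mat (1\<^sub>m m) (0\<^sub>m m m) (0\<^sub>m m m) (1\<^sub>m m)"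
  proof (rule cong_four_block_mat)
    show "?g11 * 0\<^sub>m m m + ?g1n * minv ?g1n = 1\<^sub>m m" using cg mg by simp
    show "?g11 * - C 1 + ?g1n * ?X = 0\<^sub>m m m" unfolding gX using cg cC1
      by (subst uminus_mult_right_mat) (auto intro: uminus_l_inv_mat)
    show "- minv (C 1) * 0\<^sub>m m m + 0\<^sub>m m m * minv ?g1n = 0\<^sub>m m m" using mC1 mg by simp
    show "- minv (C 1) * - C 1 + 0\<^sub>m m m * ?X = 1\<^sub>m m"
      unfolding left_mult_zero_mat[OF cXX] using mC1 cC1 by simp
  qed
  also have "\<dots> = 1\<^sub>m (m+m)" by simp
  finally have S0M: "four_block_mat ?g11 ?g1n (- minv (C 1)) (0\<^sub>m m m) * M = 1\<^sub>m (m+m)" .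
  have cS0: "four_block_mat ?g11 ?g1n (- minv (C 1)) (0\<^sub>m m m) \<in> carrier_mat (m+m) (m+m)" by auto
  have cM: "M \<in> carrier_mat (m+m) (m+m)" unfolding M_def using cXX by auto
  have "T = T * 1\<^sub>m (m+m)" using cT by simp
  also have "\<dots> = (T * four_block_mat ?g11 ?g1n (- minv (C 1)) (0\<^sub>m m m)) * M"
    unfolding S0M[symmetric] using cT cS0 cM by (intro assoc_mult_mat[symmetric]) auto
  also have "\<dots> = four_block_mat (0\<^sub>m m m) (- minv (B n)) ?gn1 ?gnn * M"
    unfolding T_def part1 ..
  also have "\<dots> = four_block_mat (0\<^sub>m m m * 0\<^sub>m m m + - minv (B n) * minv ?g1n) (0\<^sub>m m m * - C 1 + - minv (B n) * ?X)
       (?gn1 * 0\<^sub>m m m + ?gnn * minv ?g1n) (?gn1 * - C 1 + ?gnn * ?X)"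
    unfolding M_def by (rule mult_four_block_mat, insert cg mBn mg cC1 cXX, auto)
  also have "\<dots> = four_block_mat
           (- (minv (B n) * minv ?g1n))
           (- (minv (B n) * minv ?g1n * ?g11 * C 1))
           (?gnn * minv ?g1n)
           (?gnn * minv ?g1n * ?g11 * C 1 - ?gn1 * C 1)"
  proof (rule cong_four_block_mat)
    show "0\<^sub>m m m * 0\<^sub>m m m + - minv (B n) * minv ?g1n = - (minv (B n) * minv ?g1n)"
      using mBn mg by simp
    show "0\<^sub>m m m * - C 1 + - minv (B n) * ?X = - (minv (B n) * minv ?g1n * ?g11 * C 1)"
    proof -
      have z: "0\<^sub>m m m * - C 1 = 0\<^sub>m m m" using cC1 by (intro left_mult_zero_mat) auto
      have a1: "minv (B n) * ?X = (minv (B n) * (minv ?g1n * ?g11)) * C 1"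
        using mBn mg cC1 by (intro assoc_mult_mat[symmetric]) auto
      have a2: "minv (B n) * (minv ?g1n * ?g11) = minv (B n) * minv ?g1n * ?g11"
        using mBn mg by (intro assoc_mult_mat[symmetric]) auto
      have "- minv (B n) * ?X = - (minv (B n) * ?X)" using mBn cXX by (intro uminus_mult_left_mat) auto
      moreover have "- (minv (B n) * minv ?g1n * ?g11 * C 1) \<in> carrier_mat m m"
        using mBn mg cC1 by auto
      ultimately show ?thesis unfolding z a1 a2 by simp
    qed
    show "?gn1 * 0\<^sub>m m m + ?gnn * minv ?g1n = ?gnn * minv ?g1n"
      using left_add_zero_mat[OF mult_carrier_mat[OF blk_carrier mg(1)]] by simp
    show "?gn1 * - C 1 + ?gnn * ?X = ?gnn * minv ?g1n * ?g11 * C 1 - ?gn1 * C 1"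
    proof -
      have a1: "?gnn * ?X = (?gnn * (minv ?g1n * ?g11)) * C 1"
        using mg cC1 by (intro assoc_mult_mat[symmetric]) auto
      have a2: "?gnn * (minv ?g1n * ?g11) = ?gnn * minv ?g1n * ?g11"
        using mg by (intro assoc_mult_mat[symmetric]) auto
      have "?gnn * minv ?g1n * ?g11 * C 1 = ?gnn * ?X" unfolding a1 a2 ..
      moreover have "?gn1 * - C 1 = - (?gn1 * C 1)" using cg cC1 by simp
      moreover have "- (?gn1 * C 1) + ?gnn * ?X = ?gnn * ?X - ?gn1 * C 1"
        by (rule eq_matI) (insert cg cXX cC1, auto)
      ultimately show ?thesis by simp
    qed
  qed
  finally have part3: "T = four_block_mat
           (- (minv (B n) * minv ?g1n))
           (- (minv (B n) * minv ?g1n * ?g11 * C 1))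
           (?gnn * minv ?g1n)
           (?gnn * minv ?g1n * ?g11 * C 1 - ?gn1 * C 1)" .
  show ?thesis using part1 inv1n part3 unfolding T_def by blast
qed

end
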